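(* For any probability measure $G$ on $[0,\infty)$ there exists $\theta>0$ such that for all $x_1,x_2,y_1,y_2\in\mathbb Z$, with $T=T((x_1,y_1),(x_2,y_2))$, we have $\mathbb E[e^{\theta T}]<\infty$.
   Context: Model: In $\mathbb Z^2$, every vertical edge receives the deterministic weight $1$ and every horizontal edge (joining $(x,y)$ and $(x+1,y)$) receives a random weight, independently with law $G$. The passage time of a nearest-neighbour path is the sum of the weights of its edges, and $T(u,w)$ is the infimum of passage times over paths from $u$ to $w$. *)

theory Defs
  imports "HOL-Probability.Probability"
begin

type_synonym site = "int \<times> int"

text \<open>Environment: the weight of the horizontal edge joining (x,y) and (x+1,y)
  is \<open>\<omega> (x,y)\<close>; vertical edges have weight 1.\<close>

definition nn_adj :: "site \<Rightarrow> site \<Rightarrow> bool" where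
  "nn_adj p q \<longleftrightarrow> \<bar>fst p - fst q\<bar> + \<bar>snd p - snd q\<bar> = 1"

definition edge_weight :: "(site \<Rightarrow> real) \<Rightarrow> site \<Rightarrow> site \<Rightarrow> real" where
  "edge_weight \<omega> p q = (if snd p = snd q then \<omega> (min (fst p) (fst q), snd p) else 1)"

definition is_path :: "site \<Rightarrow> site \<Rightarrow> site list \<Rightarrow> bool" where
  "is_path u w ps \<longleftrightarrow> ps \<noteq> [] \<and> hd ps = u \<and> last ps = w \<and>
     (\<forall>i < length ps - 1. nn_adj (ps ! i) (ps ! Suc i))"

definition passage_time :: "(site \<Rightarrow> real) \<Rightarrow> site list \<Rightarrow> real" where
  "passage_time \<omega> ps = (\<Sum>i < length ps - 1. edge_weight \<omega> (ps ! i) (ps ! Suc i))"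

definition fpp_T :: "(site \<Rightarrow> real) \<Rightarrow> site \<Rightarrow> site \<Rightarrow> real" where
  "fpp_T \<omega> u w = Inf {passage_time \<omega> ps | ps. is_path u w ps}"

definition env_measure :: "real measure \<Rightarrow> (site \<Rightarrow> real) measure" where
  "env_measure G = PiM UNIV (\<lambda>_. G)"

end

theory Submission
  imports Defs
begin


fun pcost :: "(site \<Rightarrow> real) \<Rightarrow> site list \<Rightarrow> real" where
  "pcost \<omega> (p # q # r) = edge_weight \<omega> p q + pcost \<omega> (q # r)"
| "pcost \<omega> _ = 0"

fun chain :: "site list \<Rightarrow> bool" where
  "chain (p # q # r) = (nn_adj p q \<and> chain (q # r))"
| "chain _ = True"

lemma pt_eq: "passage_time \<omega> ps = pcost \<omega> ps"
proof (induction \<omega> ps rule: pcost.induct)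
  case (1 \<omega> p q r)
  then show ?case unfolding passage_time_def
    by (simp add: sum.lessThan_Suc_shift del: sum.lessThan_Suc)
qed (auto simp: passage_time_def)

lemma chain_eq: "chain ps = (\<forall>i < length ps - 1. nn_adj (ps ! i) (ps ! Suc i))"
proof (induction ps rule: chain.induct)
  case (1 p q r)
  then show ?case by (auto simp: less_Suc_eq_0_disj)
qed auto

lemma is_path_eq: "is_path u w ps = (ps \<noteq> [] \<and> hd ps = u \<and> last ps = w \<and> chain ps)"
  unfolding is_path_def chain_eq by simp

lemma pcost_app: "ps \<noteq> [] \<Longrightarrow> qs \<noteq> [] \<Longrightarrow> last ps = hd qs \<Longrightarrow>
   pcost \<omega> (ps @ tl qs) = pcost \<omega> ps + pcost \<omega> qs"
proof (induction ps)
  case (Cons p ps')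
  then show ?case by (cases ps'; cases qs) auto
qed simp

lemma chain_app: "ps \<noteq> [] \<Longrightarrow> qs \<noteq> [] \<Longrightarrow> last ps = hd qs \<Longrightarrow> chain ps \<Longrightarrow> chain qs \<Longrightarrow>
   chain (ps @ tl qs)"
proof (induction ps)
  case (Cons p ps')
  then show ?case by (cases ps'; cases qs) auto
qed simp

lemma pcost_nonneg: "(\<And>s. \<omega> s \<ge> 0) \<Longrightarrow> pcost \<omega> ps \<ge> 0"
  by (induction \<omega> ps rule: pcost.induct) (auto simp: edge_weight_def)

definition B :: "(site \<Rightarrow> real) \<Rightarrow> site \<Rightarrow> site \<Rightarrow> real \<Rightarrow> bool" where
  "B \<omega> u w c \<longleftrightarrow> (\<exists>ps. is_path u w ps \<and> passage_time \<omega> ps \<le> c)"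

lemma B_refl: "B \<omega> u u 0"
  unfolding B_def by (rule exI[of _ "[u]"]) (simp add: is_path_eq pt_eq)

lemma B_trans: "B \<omega> u v c \<Longrightarrow> B \<omega> v w d \<Longrightarrow> B \<omega> u w (c + d)"
  unfolding B_def is_path_eq pt_eq
proof (elim exE conjE)
  fix ps qs assume h: "ps \<noteq> []" "hd ps = u" "last ps = v" "chain ps" "pcost \<omega> ps \<le> c"
    "qs \<noteq> []" "hd qs = v" "last qs = w" "chain qs" "pcost \<omega> qs \<le> d"
  show "\<exists>ps. (ps \<noteq> [] \<and> hd ps = u \<and> last ps = w \<and> chain ps) \<and> pcost \<omega> ps \<le> c + d"
  proof (intro exI conjI)
    show "ps @ tl qs \<noteq> []" using h by simp
    show "hd (ps @ tl qs) = u" using h by simp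
    show "last (ps @ tl qs) = w" using h by (cases qs) (auto simp: last_append)
    show "chain (ps @ tl qs)" using h by (intro chain_app) auto
    show "pcost \<omega> (ps @ tl qs) \<le> c + d" using h by (subst pcost_app) auto
  qed
qed

lemma B_mono: "B \<omega> u w c \<Longrightarrow> c \<le> d \<Longrightarrow> B \<omega> u w d"
  unfolding B_def by force

lemma B_edge: "nn_adj u w \<Longrightarrow> B \<omega> u w (edge_weight \<omega> u w)"
  unfolding B_def by (rule exI[of _ "[u,w]"]) (simp add: is_path_eq pt_eq)

lemma B_up: "B \<omega> (x, y) (x, y + 1) 1"
  using B_edge[of "(x,y)" "(x,y+1)" \<omega>] by (simp add: nn_adj_def edge_weight_def)
lemma B_down: "B \<omega> (x, y + 1) (x, y) 1"
  using B_edge[of "(x,y+1)" "(x,y)" \<omega>] by (simp add: nn_adj_def edge_weight_def)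
lemma B_right: "B \<omega> (x, y) (x + 1, y) (\<omega> (x, y))"
  using B_edge[of "(x,y)" "(x+1,y)" \<omega>] by (simp add: nn_adj_def edge_weight_def)
lemma B_left: "B \<omega> (x + 1, y) (x, y) (\<omega> (x, y))"
  using B_edge[of "(x+1,y)" "(x,y)" \<omega>] by (simp add: nn_adj_def edge_weight_def)

lemma B_vert: "B \<omega> (x, y) (x, y + int k) k \<and> B \<omega> (x, y + int k) (x, y) k"
proof (induction k)
  case 0 then show ?case by (simp add: B_refl)
next
  case (Suc k)
  have 1: "B \<omega> (x, y) (x, y + int k + 1) (real k + 1)"
    by (rule B_trans[OF conjunct1[OF Suc] B_up[of \<omega> x "y + int k"]])
  have 2: "B \<omega> (x, y + int k + 1) (x, y) (1 + real k)"
    by (rule B_trans[OF B_down[of \<omega> x "y + int k"] conjunct2[OF Suc]])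
  have eq: "y + int (Suc k) = y + int k + 1" "real (Suc k) = real k + 1" by simp_all
  show ?case unfolding eq using 1 2[unfolded add.commute[of 1 "real k"]] by blast
qed

lemma B_vert_abs: "B \<omega> (x, y) (x, y') \<bar>y - y'\<bar>"
proof (cases "y \<le> y'")
  case True
  define k where "k = nat (y' - y)"
  have "y' = y + int k" using True by (simp add: k_def)
  then show ?thesis using conjunct1[OF B_vert[of \<omega> x y k]] by simp
next
  case False
  define k where "k = nat (y - y')"
  have "y = y' + int k" using False by (simp add: k_def)
  then show ?thesis using conjunct2[OF B_vert[of \<omega> x y' k]] by simp
qed

lemma B_cross: "\<omega> (x, y + int k) \<le> a \<Longrightarrow>
   B \<omega> (x, y) (x + 1, y) (2 * k + a) \<and> B \<omega> (x + 1, y) (x, y) (2 * k + a)"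
proof -
  assume h: "\<omega> (x, y + int k) \<le> a"
  have r0: "B \<omega> (x, y) (x + 1, y) (real k + \<omega> (x, y + int k) + real k)"
    by (rule B_trans[OF B_trans[OF conjunct1[OF B_vert[of \<omega> x y k]] B_right] conjunct2[OF B_vert[of \<omega> "x+1" y k]]])
  have l0: "B \<omega> (x + 1, y) (x, y) (real k + \<omega> (x, y + int k) + real k)"
    by (rule B_trans[OF B_trans[OF conjunct1[OF B_vert[of \<omega> "x+1" y k]] B_left] conjunct2[OF B_vert[of \<omega> x y k]]])
  have le: "real k + \<omega> (x, y + int k) + real k \<le> 2 * real k + a" using h by simp
  show ?thesis using B_mono[OF r0 le] B_mono[OF l0 le] by blast
qed

lemma B_T: "(\<And>s. \<omega> s \<ge> 0) \<Longrightarrow> B \<omega> u w c \<Longrightarrow> fpp_T \<omega> u w \<le> c"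
  unfolding B_def fpp_T_def
proof (elim exE conjE)
  fix ps assume h: "\<And>s. \<omega> s \<ge> 0" "is_path u w ps" "passage_time \<omega> ps \<le> c"
  have "Inf {passage_time \<omega> ps |ps. is_path u w ps} \<le> passage_time \<omega> ps"
    apply (rule cInf_lower)
    using h apply blast
    unfolding bdd_below_def using pcost_nonneg[of \<omega>] h(1) by (auto simp: pt_eq intro!: exI[of _ 0])
  then show "Inf {passage_time \<omega> ps |ps. is_path u w ps} \<le> c" using h by simp
qed



lemma B_row: "(\<forall>x\<in>{lo..<lo + int n}. \<omega> (x, y + int (kk x)) \<le> a) \<Longrightarrow>
  B \<omega> (lo, y) (lo + int n, y) (\<Sum>x\<in>{lo..<lo + int n}. 2 * real (kk x) + a) \<and>
  B \<omega> (lo + int n, y) (lo, y) (\<Sum>x\<in>{lo..<lo + int n}. 2 * real (kk x) + a)"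
proof (induction n)
  case 0 then show ?case by (simp add: B_refl)
next
  case (Suc n)
  let ?S = "\<lambda>n. (\<Sum>x\<in>{lo..<lo + int n}. 2 * real (kk x) + a)"
  have IH: "B \<omega> (lo, y) (lo + int n, y) (?S n) \<and> B \<omega> (lo + int n, y) (lo, y) (?S n)"
    using Suc by auto
  have h: "\<omega> (lo + int n, y + int (kk (lo + int n))) \<le> a" using Suc.prems by auto
  have c: "B \<omega> (lo + int n, y) (lo + int n + 1, y) (2 * real (kk (lo + int n)) + a) \<and>
     B \<omega> (lo + int n + 1, y) (lo + int n, y) (2 * real (kk (lo + int n)) + a)"
    by (rule B_cross[where x="lo + int n" and y=y and k="kk (lo + int n)" and \<omega>=\<omega> and a=a, OF h])
  have set: "{lo..<lo + int (Suc n)} = insert (lo + int n) {lo..<lo + int n}" by auto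
  have S: "?S (Suc n) = (2 * real (kk (lo + int n)) + a) + ?S n"
    unfolding set by (subst sum.insert) auto
  have e: "lo + int (Suc n) = lo + int n + 1" by simp
  have 1: "B \<omega> (lo, y) (lo + int n + 1, y) (?S n + (2 * real (kk (lo + int n)) + a))"
    by (rule B_trans[OF conjunct1[OF IH] conjunct1[OF c]])
  have 2: "B \<omega> (lo + int n + 1, y) (lo, y) ((2 * real (kk (lo + int n)) + a) + ?S n)"
    by (rule B_trans[OF conjunct2[OF c] conjunct2[OF IH]])
  show ?case unfolding S unfolding e using 1[unfolded add.commute[of "?S n"]] 2 by blast
qed

lemma B_row2:
  assumes "\<forall>x\<in>{min x1 x2..<max x1 x2}. \<omega> (x, y + int (kk x)) \<le> a"
  shows "B \<omega> (x1, y) (x2, y) (\<Sum>x\<in>{min x1 x2..<max x1 x2}. 2 * real (kk x) + a)"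
proof (cases "x1 \<le> x2")
  case True
  define n where "n = nat (x2 - x1)"
  have e: "x2 = x1 + int n" using True by (simp add: n_def)
  show ?thesis using B_row[of x1 n \<omega> y kk a] assms True unfolding e by simp
next
  case False
  define n where "n = nat (x1 - x2)"
  have e: "x1 = x2 + int n" using False by (simp add: n_def)
  show ?thesis using B_row[of x2 n \<omega> y kk a] assms False unfolding e by simp
qed

definition Fc :: "real \<Rightarrow> nat \<Rightarrow> int \<Rightarrow> int \<Rightarrow> (site \<Rightarrow> real) \<Rightarrow> ennreal" where
  "Fc \<theta> a y x \<omega> = (\<Sum>k. ennreal (exp (\<theta> * a) * 2 ^ k) *
       indicator {\<omega>. \<forall>j<k. real a < \<omega> (x, y + int j)} \<omega>)"

lemma Fc_ge: "(\<forall>j<k. real a < \<omega> (x, y + int j)) \<Longrightarrow> ennreal (exp (\<theta> * a) * 2 ^ k) \<le> Fc \<theta> a y x \<omega>"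
  unfolding Fc_def
  using sum_le_suminf[of "\<lambda>k. ennreal (exp (\<theta> * a) * 2 ^ k) * indicator {\<omega>. \<forall>j<k. real a < \<omega> (x, y + int j)} \<omega>" "{k}"]
  by (simp add: summableI)

lemma Fc_top: assumes "\<theta> \<ge> 0" "\<forall>j. real a < \<omega> (x, y + int j)" shows "Fc \<theta> a y x \<omega> = \<top>"
proof -
  have "Fc \<theta> a y x \<omega> = (\<Sum>k. ennreal (exp (\<theta> * a) * 2 ^ k))"
    unfolding Fc_def using assms by simp
  also have "\<dots> = \<top>"
  proof (rule summable_iff_suminf_neq_top)
    show "\<not> summable (\<lambda>k. exp (\<theta> * real a) * 2 ^ k)"
    proof
      assume "summable (\<lambda>k. exp (\<theta> * real a) * 2 ^ k)"
      then have "(\<lambda>k. exp (\<theta> * real a) * 2 ^ k) \<longlonglongrightarrow> 0" by (rule summable_LIMSEQ_zero)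
      moreover have "\<forall>k. 1 \<le> exp (\<theta> * real a) * (2::real) ^ k"
      proof
        fix k
        have "(1::real) * 1 \<le> exp (\<theta> * real a) * (2::real) ^ k"
          by (rule mult_mono) (use assms(1) in auto)
        then show "1 \<le> exp (\<theta> * real a) * (2::real) ^ k" by simp
      qed
      ultimately show False
        by (metis (no_types, lifting) LIMSEQ_le_const le_numeral_extra(2))
    qed
  qed simp
  finally show ?thesis .
qed

lemma Fc_pos: "ennreal (exp (\<theta> * a)) \<le> Fc \<theta> a y x \<omega>"
  using Fc_ge[of 0 a \<omega> x y \<theta>] by simp

lemma exp_ln2: "exp (ln 2 / 2 * (2 * real k + a)) = exp (ln 2 / 2 * a) * 2 ^ k"
proof -
  have "exp (ln 2 / 2 * (2 * real k + a)) = exp (real k * ln 2) * exp (ln 2 / 2 * a)"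
    by (simp add: algebra_simps flip: exp_add)
  also have "exp (real k * ln 2) = 2 ^ k" by (simp add: exp_of_nat_mult)
  finally show ?thesis by simp
qed

lemma pointwise:
  assumes nonneg: "\<And>s. \<omega> s \<ge> 0" and th: "\<theta> = ln 2 / 2"
  shows "ennreal (exp (\<theta> * fpp_T \<omega> (x1, y1) (x2, y2))) \<le>
     ennreal (exp (\<theta> * \<bar>y1 - y2\<bar>)) * (\<Prod>x\<in>{min x1 x2..<max x1 x2}. Fc \<theta> a y2 x \<omega>)"
proof (cases "\<forall>x\<in>{min x1 x2..<max x1 x2}. \<exists>k. \<omega> (x, y2 + int k) \<le> a")
  case True
  define X where "X = {min x1 x2..<max x1 x2}"
  define kk where "kk x = (LEAST k. \<omega> (x, y2 + int k) \<le> a)" for x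
  have kk1: "\<forall>x\<in>X. \<omega> (x, y2 + int (kk x)) \<le> a"
    using True unfolding kk_def X_def by (auto intro: LeastI_ex)
  have kk2: "\<forall>j<kk x. real a < \<omega> (x, y2 + int j)" for x
    unfolding kk_def using not_less_Least by force
  have th0: "\<theta> \<ge> 0" unfolding th by simp
  define S where "S = (\<Sum>x\<in>X. 2 * real (kk x) + a)"
  have "B \<omega> (x1, y1) (x2, y2) (\<bar>y1 - y2\<bar> + S)"
    unfolding S_def X_def
    by (rule B_trans[OF B_vert_abs B_row2]) (use kk1 X_def in simp)
  then have T: "fpp_T \<omega> (x1, y1) (x2, y2) \<le> \<bar>y1 - y2\<bar> + S" by (rule B_T[OF nonneg])
  have "exp (\<theta> * fpp_T \<omega> (x1, y1) (x2, y2)) \<le> exp (\<theta> * (\<bar>y1 - y2\<bar> + S))"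
    using T th0 by (simp add: mult_left_mono)
  also have "\<dots> = exp (\<theta> * \<bar>y1 - y2\<bar>) * (\<Prod>x\<in>X. exp (\<theta> * (2 * real (kk x) + a)))"
    unfolding S_def X_def by (simp add: distrib_left sum_distrib_left exp_add exp_sum)
  also have "\<dots> = exp (\<theta> * \<bar>y1 - y2\<bar>) * (\<Prod>x\<in>X. exp (\<theta> * a) * 2 ^ kk x)"
    unfolding th exp_ln2 ..
  finally have r: "exp (\<theta> * fpp_T \<omega> (x1, y1) (x2, y2)) \<le>
      exp (\<theta> * \<bar>y1 - y2\<bar>) * (\<Prod>x\<in>X. exp (\<theta> * a) * 2 ^ kk x)" .
  have eq1: "ennreal (exp (\<theta> * \<bar>y1 - y2\<bar>) * (\<Prod>x\<in>X. exp (\<theta> * a) * 2 ^ kk x)) =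
     ennreal (exp (\<theta> * \<bar>y1 - y2\<bar>)) * ennreal (\<Prod>x\<in>X. exp (\<theta> * a) * 2 ^ kk x)"
    by (rule ennreal_mult) (auto intro: prod_nonneg)
  have eq2: "(\<Prod>x\<in>X. ennreal (exp (\<theta> * a) * 2 ^ kk x)) = ennreal (\<Prod>x\<in>X. exp (\<theta> * a) * 2 ^ kk x)"
    by (rule prod_ennreal) simp
  have 1: "ennreal (exp (\<theta> * fpp_T \<omega> (x1, y1) (x2, y2))) \<le>
      ennreal (exp (\<theta> * \<bar>y1 - y2\<bar>)) * (\<Prod>x\<in>X. ennreal (exp (\<theta> * a) * 2 ^ kk x))"
    unfolding eq2 using ennreal_leI[OF r, unfolded eq1] .
  from 1 have "ennreal (exp (\<theta> * fpp_T \<omega> (x1, y1) (x2, y2))) \<le>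
      ennreal (exp (\<theta> * \<bar>y1 - y2\<bar>)) * (\<Prod>x\<in>X. ennreal (exp (\<theta> * a) * 2 ^ kk x))" .
  also have "\<dots> \<le> ennreal (exp (\<theta> * \<bar>y1 - y2\<bar>)) * (\<Prod>x\<in>X. Fc \<theta> a y2 x \<omega>)"
    by (intro mult_left_mono prod_mono_ennreal Fc_ge kk2) auto
  finally show ?thesis unfolding X_def .
next
  case False
  then obtain x0 where x0: "x0 \<in> {min x1 x2..<max x1 x2}" "\<forall>k. real a < \<omega> (x0, y2 + int k)"
    by (auto simp: not_le)
  have th0: "\<theta> \<ge> 0" unfolding th by simp
  have "(\<Prod>x\<in>{min x1 x2..<max x1 x2}. Fc \<theta> a y2 x \<omega>) = \<top>"
    unfolding ennreal_prod_eq_top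
  proof (intro conjI ballI bexI)
    show "Fc \<theta> a y2 x \<omega> \<noteq> 0" for x
      using Fc_pos[of \<theta> a y2 x \<omega>] by (metis ennreal_eq_0_iff exp_gt_zero not_le le_zero_eq)
    show "Fc \<theta> a y2 x0 \<omega> = \<top>" using Fc_top[OF th0 x0(2)] .
  qed (use x0 in auto)
  then show ?thesis by (simp add: ennreal_top_mult_left)
qed



lemma Fc_meas:
  assumes "\<And>j. (x, y + int j) \<in> I" and G: "sets G = sets borel"
  shows "Fc \<theta> a y x \<in> borel_measurable (PiM I (\<lambda>_. G))"
proof -
  have [measurable]: "(\<lambda>\<omega>. \<omega> (x, y + int j)) \<in> borel_measurable (PiM I (\<lambda>_. G))" for j
    using measurable_component_singleton[of "(x, y + int j)" I "\<lambda>_. G", OF assms(1)]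
    by (simp add: measurable_cong_sets[OF refl G])
  have e: "Fc \<theta> a y x = (\<lambda>\<omega>. \<Sum>k. ennreal (exp (\<theta> * a) * 2 ^ k) *
       (if (\<forall>j\<in>{..<k}. real a < \<omega> (x, y + int j)) then 1 else 0))"
    by (simp add: Fc_def indicator_def of_bool_def fun_eq_iff Ball_def)
  show ?thesis unfolding e by measurable
qed

lemma int_Fc:
  assumes PG: "prob_space G" and G: "sets G = sets borel"
    and q: "emeasure G {real a<..} \<le> ennreal (1/4)" and th: "\<theta> = ln 2 / 2"
  shows "(\<integral>\<^sup>+\<omega>. Fc \<theta> a y x \<omega> \<partial>PiM UNIV (\<lambda>_::site. G)) < \<top>"
proof -
  interpret G: prob_space G by fact
  interpret P: product_prob_space "\<lambda>_::site. G" UNIV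
    by (simp add: product_prob_space_def product_prob_space_axioms_def product_sigma_finite_def
        G.sigma_finite_measure_axioms PG)
  let ?M = "PiM UNIV (\<lambda>_::site. G)"
  let ?c = "\<lambda>k. ennreal (exp (\<theta> * a) * 2 ^ k)"
  let ?S = "\<lambda>k. {\<omega> \<in> space ?M. \<forall>i\<in>(\<lambda>j. (x, y + int j)) ` {..<k}. \<omega> i \<in> {real a<..}}"
  have spG: "space G = UNIV" using sets_eq_imp_space_eq[OF G] by simp
  have sp: "space ?M = UNIV" by (simp add: space_PiM spG)
  have Sk: "{\<omega>. \<forall>j<k. real a < \<omega> (x, y + int j)} = ?S k" for k by (auto simp: sp)
  have meS: "emeasure ?M (?S k) = emeasure G {real a<..} ^ k" for k
  proof -
    have "emeasure ?M (?S k) = (\<Prod>i\<in>(\<lambda>j. (x, y + int j)) ` {..<k}. emeasure G {real a<..})"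
      by (rule P.emeasure_PiM_Collect) (auto simp: G)
    also have "\<dots> = emeasure G {real a<..} ^ k"
      by (subst prod_constant) (simp add: card_image inj_on_def)
    finally show ?thesis .
  qed
  have Ssets: "?S k \<in> sets ?M" for k
  proof -
    have "?S k = prod_emb UNIV (\<lambda>_. G) ((\<lambda>j. (x, y + int j)) ` {..<k}) (PiE ((\<lambda>j. (x, y + int j)) ` {..<k}) (\<lambda>_. {real a<..}))"
      by (auto simp: prod_emb_def sp PiE_iff spG)
    also have "\<dots> \<in> sets ?M"
      by (intro sets_PiM_I) (auto simp: G)
    finally show ?thesis .
  qed
  have "(\<integral>\<^sup>+\<omega>. Fc \<theta> a y x \<omega> \<partial>?M) = (\<integral>\<^sup>+\<omega>. (\<Sum>k. ?c k * indicator (?S k) \<omega>) \<partial>?M)"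
    unfolding Fc_def Sk ..
  also have "\<dots> = (\<Sum>k. \<integral>\<^sup>+\<omega>. ?c k * indicator (?S k) \<omega> \<partial>?M)"
    by (rule nn_integral_suminf) (use Ssets in measurable)
  also have "\<dots> = (\<Sum>k. ?c k * emeasure G {real a<..} ^ k)"
    by (simp only: nn_integral_cmult_indicator[OF Ssets] meS)
  also have "\<dots> \<le> (\<Sum>k. ennreal (exp (\<theta> * a) * (1/2) ^ k))"
  proof (intro suminf_le summableI)
    fix k
    have "?c k * emeasure G {real a<..} ^ k \<le> ?c k * ennreal (1/4) ^ k"
      by (intro mult_left_mono power_mono q) auto
    also have "\<dots> = ennreal (exp (\<theta> * a) * 2 ^ k * (1/4) ^ k)"
      by (simp add: ennreal_mult ennreal_power)
    also have "exp (\<theta> * a) * 2 ^ k * (1/4) ^ k = exp (\<theta> * a) * (1/2::real) ^ k"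
      by (simp add: power_divide field_simps flip: power_mult_distrib)
    finally show "?c k * emeasure G {real a<..} ^ k \<le> ennreal (exp (\<theta> * a) * (1/2) ^ k)" .
  qed
  also have "\<dots> < \<top>"
    by (simp add: less_top[symmetric] ennreal_suminf_neq_top summable_mult summable_geometric)
  finally show ?thesis .
qed

theorem corollary3p3:
  fixes G :: "real measure"
  assumes "prob_space G" and "sets G = sets borel" and "measure G {0..} = 1"
  shows "\<exists>\<theta>>0. \<forall>x1 x2 y1 y2 :: int.
    (\<integral>\<^sup>+ \<omega>. ennreal (exp (\<theta> * fpp_T \<omega> (x1, y1) (x2, y2))) \<partial>env_measure G) < \<infinity>"
proof -
  note PG = assms(1) and G = assms(2)
  interpret G: prob_space G by fact
  interpret P: product_prob_space "\<lambda>_::site. G" UNIV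
    by (simp add: product_prob_space_def product_prob_space_axioms_def product_sigma_finite_def
        G.sigma_finite_measure_axioms PG)
  let ?M = "PiM UNIV (\<lambda>_::site. G)"
  have spG: "space G = UNIV" using sets_eq_imp_space_eq[OF G] by simp
  have sp: "space ?M = UNIV" by (simp add: space_PiM spG)
  obtain a :: nat where q: "emeasure G {real a<..} \<le> ennreal (1/4)"
  proof -
    let ?A = "\<lambda>n::nat. {real n<..}"
    have "(\<lambda>n. measure G (?A n)) \<longlonglongrightarrow> measure G (\<Inter>n. ?A n)"
      by (rule G.finite_Lim_measure_decseq) (auto simp: G decseq_def)
    moreover have "(\<Inter>n. ?A n) = {}"
    proof -
      have "z \<notin> (\<Inter>n. ?A n)" for z :: real
      proof -
        obtain n where "z < real n" using reals_Archimedean2 by blast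
        then have "z \<notin> ?A n" by simp
        then show ?thesis by blast
      qed
      then show ?thesis by blast
    qed
    ultimately have "(\<lambda>n. measure G (?A n)) \<longlonglongrightarrow> 0" by simp
    then have "eventually (\<lambda>n. measure G (?A n) < 1/4) sequentially"
      by (rule order_tendstoD) simp
    then obtain n where "measure G (?A n) < 1/4" by (auto simp: eventually_sequentially)
    then have "emeasure G (?A n) \<le> ennreal (1/4)"
      by (simp add: G.emeasure_eq_measure)
    then show ?thesis by (rule that)
  qed
  define \<theta> :: real where "\<theta> = ln 2 / 2"
  have th_pos: "\<theta> > 0" by (simp add: \<theta>_def)
  have AEnn: "AE \<omega> in ?M. \<forall>s. \<omega> s \<ge> 0"
  proof (subst AE_all_countable, intro allI)
    fix s :: site
    have "AE z in G. z \<in> {0..}" by (rule G.AE_prob_1) (rule assms(3))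
    then have nn: "AE z in G. 0 \<le> z" by simp
    show "AE \<omega> in ?M. 0 \<le> \<omega> s"
      using AE_PiM_component[where I=UNIV and M="\<lambda>_. G" and P="\<lambda>z. 0 \<le> z" and i=s] PG nn by simp
  qed
  have ind0: "P.indep_vars (\<lambda>_. G) (\<lambda>i \<omega>. \<omega> i) UNIV"
  proof (subst P.indep_vars_iff_distr_eq_PiM)
    show "distr ?M (PiM UNIV (\<lambda>_. G)) (\<lambda>x. \<lambda>i\<in>UNIV. x i) = PiM UNIV (\<lambda>i. distr ?M G (\<lambda>\<omega>. \<omega> i))"
    proof -
      have "distr ?M (PiM UNIV (\<lambda>_. G)) (\<lambda>x. \<lambda>i\<in>UNIV. x i) = distr ?M ?M (\<lambda>x. x)"
        by (simp add: restrict_UNIV)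
      also have "\<dots> = ?M" by (rule distr_id)
      also have "\<dots> = PiM UNIV (\<lambda>i. distr ?M G (\<lambda>\<omega>. \<omega> i))"
      proof (rule PiM_cong)
        fix i :: site
        show "G = distr ?M G (\<lambda>\<omega>. \<omega> i)" using distr_PiM_component[of UNIV "\<lambda>_. G" i] PG by simp
      qed simp
      finally show ?thesis .
    qed
  qed auto
  show ?thesis
  proof (intro exI[of _ \<theta>] conjI th_pos allI)
    fix x1 x2 y1 y2 :: int
    define X where "X = {min x1 x2..<max x1 x2}"
    let ?K = "\<lambda>x::int. {x} \<times> (UNIV :: int set)"
    have ind1: "P.indep_vars (\<lambda>j. PiM (?K j) (\<lambda>_. G)) (\<lambda>j \<omega>. restrict (\<lambda>i. \<omega> i) (?K j)) X"
      by (rule P.indep_vars_restrict[OF ind0]) (auto simp: disjoint_family_on_def)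
    have ind2: "P.indep_vars (\<lambda>_. borel) (\<lambda>j \<omega>. Fc \<theta> a y2 j (restrict (\<lambda>i. \<omega> i) (?K j))) X"
      by (rule P.indep_vars_compose2[OF ind1]) (rule Fc_meas[OF _ G], simp)
    have rr: "Fc \<theta> a y2 j (restrict (\<lambda>i. \<omega> i) (?K j)) = Fc \<theta> a y2 j \<omega>" for j \<omega>
      by (simp add: Fc_def indicator_def)
    have ind3: "P.indep_vars (\<lambda>_. borel) (\<lambda>j \<omega>. Fc \<theta> a y2 j \<omega>) X"
      using ind2 unfolding rr .
    have "(\<integral>\<^sup>+ \<omega>. ennreal (exp (\<theta> * fpp_T \<omega> (x1, y1) (x2, y2))) \<partial>?M) \<le>
        (\<integral>\<^sup>+ \<omega>. ennreal (exp (\<theta> * \<bar>y1 - y2\<bar>)) * (\<Prod>x\<in>X. Fc \<theta> a y2 x \<omega>) \<partial>?M)"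
    proof (rule nn_integral_mono_AE)
      show "AE \<omega> in ?M. ennreal (exp (\<theta> * fpp_T \<omega> (x1, y1) (x2, y2))) \<le>
          ennreal (exp (\<theta> * \<bar>y1 - y2\<bar>)) * (\<Prod>x\<in>X. Fc \<theta> a y2 x \<omega>)"
        using AEnn
      proof eventually_elim
        case (elim \<omega>)
        show ?case unfolding X_def by (rule pointwise) (use elim in \<open>auto simp: \<theta>_def\<close>)
      qed
    qed
    also have "\<dots> = ennreal (exp (\<theta> * \<bar>y1 - y2\<bar>)) * (\<integral>\<^sup>+ \<omega>. (\<Prod>x\<in>X. Fc \<theta> a y2 x \<omega>) \<partial>?M)"
      by (rule nn_integral_cmult) (intro borel_measurable_prod_ennreal Fc_meas[OF _ G], simp)
    also have "(\<integral>\<^sup>+ \<omega>. (\<Prod>x\<in>X. Fc \<theta> a y2 x \<omega>) \<partial>?M) = (\<Prod>x\<in>X. \<integral>\<^sup>+ \<omega>. Fc \<theta> a y2 x \<omega> \<partial>?M)"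
      by (rule P.indep_vars_nn_integral) (use ind3 in \<open>auto simp: X_def\<close>)
    also have "ennreal (exp (\<theta> * \<bar>y1 - y2\<bar>)) * (\<Prod>x\<in>X. \<integral>\<^sup>+ \<omega>. Fc \<theta> a y2 x \<omega> \<partial>?M) < \<top>"
    proof -
      have h: "(\<integral>\<^sup>+ \<omega>. Fc \<theta> a y2 x \<omega> \<partial>?M) \<noteq> \<top>" for x
        using int_Fc[OF PG G q \<theta>_def, of y2 x] by simp
      have "(\<Prod>x\<in>X. \<integral>\<^sup>+ \<omega>. Fc \<theta> a y2 x \<omega> \<partial>?M) \<noteq> \<top>"
        unfolding ennreal_prod_eq_top using h by blast
      then show ?thesis by (simp add: ennreal_mult_less_top less_top)
    qed
    finally show "(\<integral>\<^sup>+ \<omega>. ennreal (exp (\<theta> * fpp_T \<omega> (x1, y1) (x2, y2))) \<partial>env_measure G) < \<infinity>"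
      by (simp add: env_measure_def)
  qed
qed

end
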